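(* Let $\{\mathcal{N}_t\}_{t=1}^h$ be a time series of power network descriptions as in the context, sharing the same private line conductances $\mathbf{g}\in\mathbb{R}^n$ and susceptances $\mathbf{b}\in\mathbb{R}^n$. Fix $\alpha>0$, $\epsilon>0$, $\beta>0$, $\lambda>0$. Then the Multi-step Power Lines Obfuscation (MPLO) mechanism described in the context, viewed as a randomized algorithm mapping the private line-parameter data to the released network descriptions $\{\dot{\mathcal{N}}_t\}_{t=1}^h$, is $\epsilon$-differentially private with respect to the $\alpha$-indistinguishability adjacency relation.
   Context: Each $\mathcal{N}_t$ ($t=1,\dots,h$) has the same buses $N$, the same $n$ directed lines $E$ (with reversals $E^R$), the same line admittances $Y_{ij}=g_{ij}+\mathbf{i}b_{ij}$, and the same public bounds (voltage bounds $v^l_i,v^u_i$, generator bounds $S^{gl}_i,S^{gu}_i$, angle limits $\theta^\Delta_{ij}$, thermal limits $s^u_{ij}$, cost coefficients $c_{0i},c_{1i},c_{2i}$, slack bus $s$), but time-dependent public demands $S^d_i(t)$; $O^*(t)>0$ is the public optimal AC-OPF cost of $\mathcal{N}_t$. The ratio vector $\mathbf r=(r_{ij})$ and the partition of lines by voltage level ($E(v)$, $n_v=|E(v)|$, each line in exactly one $E(v)$) are public. $\mathrm{cost}(S^g_i)=c_{2i}(\Re S^g_i)^2+c_{1i}\Re S^g_i+c_{0i}$. $\mathrm{Lap}(\lambda')$ has density $\frac{1}{2\lambda'}e^{-|x|/\lambda'}$. Differential privacy: private datasets (line-parameter vectors) $D\sim_\alpha D'$ if they differ in a single coordinate by at most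 $\alpha$ and agree elsewhere; $\mathcal{A}$ is $\epsilon$-DP if $\Pr[\mathcal{A}(D)\in O]\le e^\epsilon\Pr[\mathcal{A}(D')\in O]$ for all such $D,D'$ and measurable $O$. MPLO mechanism (independent noise): 1. $\tilde{\mathbf g}=\mathbf g+\mathrm{Lap}(3\alpha/\epsilon)^n$; 2. $\tilde b_{ij}=r_{ij}\tilde g_{ij}$; 3. for each voltage level $v$: $\tilde\mu^v_{\mathbf g}=\frac1{n_v}\sum_{E(v)}g_{ij}+\mathrm{Lap}(3\alpha/(n_v\epsilon))$, $\tilde\mu^v_{\mathbf b}=\frac1{n_v}\sum_{E(v)}b_{ij}+\mathrm{Lap}(3\alpha/(n_v\epsilon))$; 4. solve (selecting a solution by any fixed rule), with variables $\dot Y_{ij}=\dot g_{ij}+\mathbf i\dot b_{ij}$ and, for each $t$, $S^g_i(t),V_i(t),S_{ij}(t)$: minimize $\|\dot{\mathbf g}-\tilde{\mathbf g}\|_2^2+\|\dot{\mathbf b}-\tilde{\mathbf b}\|_2^2$ subject to $\tilde\mu^v_{\mathbf g}/\lambda\le\dot g_{ij}\le\lambda\tilde\mu^v_{\mathbf g}$ and $\tilde\mu^v_{\mathbf b}/\lambda\le\dot b_{ij}\le\lambda\tilde\mu^v_{\mathbf b}$ for lines at level $v$, and for every $t$: $\frac{|\sum_i\mathrm{cost}(S^g_i(t))-O^*(t)|}{O^*(t)}\le\beta$, $\angle V_s(t)=0$, $v^l_i\le|V_i(t)|\le v^u_i$, $S^{gl}_i\le S^g_i(t)\le S^{gu}_i$,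 $S^g_i(t)-S^d_i(t)=\sum_{(i,j)\in E\cup E^R}S_{ij}(t)$, $-\theta^\Delta_{ij}\le\angle(V_i(t)V_j^*(t))\le\theta^\Delta_{ij}$, $|S_{ij}(t)|\le s^u_{ij}$, $S_{ij}(t)=\dot Y^*_{ij}|V_i(t)|^2-\dot Y^*_{ij}V_i(t)V_j^*(t)$. Output: for each $t$, $\dot{\mathcal N}_t$ equal to $\mathcal N_t$ with admittances replaced by $\dot Y$. *)

theory Defs
  imports "HOL-Probability.Probability"
begin

text \<open>Buses have type 'n, directed lines have type 'e (line e goes from bus
  fr e to bus to e; its reversal is the line from to e to fr e).\<close>

record ('n, 'e) grid =
  fr     :: "'e \<Rightarrow> 'n"
  to     :: "'e \<Rightarrow> 'n"
  vlo    :: "'n \<Rightarrow> real"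
  vup    :: "'n \<Rightarrow> real"
  sglo   :: "'n \<Rightarrow> complex"
  sgup   :: "'n \<Rightarrow> complex"
  thmax  :: "'e \<Rightarrow> real"
  smax   :: "'e \<Rightarrow> real"
  cc0    :: "'n \<Rightarrow> real"
  cc1    :: "'n \<Rightarrow> real"
  cc2    :: "'n \<Rightarrow> real"
  slack  :: "'n"

text \<open>Componentwise order on complex powers (bounds on active and reactive power).\<close>
definition cle :: "complex \<Rightarrow> complex \<Rightarrow> bool" where
  "cle z w \<longleftrightarrow> Re z \<le> Re w \<and> Im z \<le> Im w"

definition gen_cost :: "('n, 'e) grid \<Rightarrow> 'n \<Rightarrow> complex \<Rightarrow> real" where
  "gen_cost G i S = cc2 G i * (Re S)\<^sup>2 + cc1 G i * Re S + cc0 G i"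

definition line_flow :: "complex \<Rightarrow> complex \<Rightarrow> complex \<Rightarrow> complex" where
  "line_flow Y Vi Vj = cnj Y * (complex_of_real (cmod Vi))\<^sup>2 - cnj Y * Vi * cnj Vj"

text \<open>AC-OPF constraints at one time step with demand Sd, optimal cost Os,
  admittances Y, generation Sg, voltages V, forward flows Sf (on E) and
  reverse flows Sr (on E^R).\<close>
definition opf_feasible ::
  "('n::finite, 'e::finite) grid \<Rightarrow> ('n \<Rightarrow> complex) \<Rightarrow> real \<Rightarrow> real \<Rightarrow> complex^'e
    \<Rightarrow> ('n \<Rightarrow> complex) \<Rightarrow> ('n \<Rightarrow> complex) \<Rightarrow> ('e \<Rightarrow> complex) \<Rightarrow> ('e \<Rightarrow> complex) \<Rightarrow> bool" where
  "opf_feasible G Sd Os \<beta> Y Sg V Sf Sr \<longleftrightarrow>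
     \<bar>(\<Sum>i\<in>UNIV. gen_cost G i (Sg i)) - Os\<bar> / Os \<le> \<beta> \<and>
     Arg (V (slack G)) = 0 \<and>
     (\<forall>i. vlo G i \<le> cmod (V i) \<and> cmod (V i) \<le> vup G i) \<and>
     (\<forall>i. cle (sglo G i) (Sg i) \<and> cle (Sg i) (sgup G i)) \<and>
     (\<forall>i. Sg i - Sd i = (\<Sum>e\<in>{e. fr G e = i}. Sf e) + (\<Sum>e\<in>{e. to G e = i}. Sr e)) \<and>
     (\<forall>e. - thmax G e \<le> Arg (V (fr G e) * cnj (V (to G e))) \<and>
          Arg (V (fr G e) * cnj (V (to G e))) \<le> thmax G e \<and>
          - thmax G e \<le> Arg (V (to G e) * cnj (V (fr G e))) \<and>
          Arg (V (to G e) * cnj (V (fr G e))) \<le> thmax G e) \<and>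
     (\<forall>e. cmod (Sf e) \<le> smax G e \<and> cmod (Sr e) \<le> smax G e) \<and>
     (\<forall>e. Sf e = line_flow (Y $ e) (V (fr G e)) (V (to G e)) \<and>
          Sr e = line_flow (Y $ e) (V (to G e)) (V (fr G e)))"

definition mplo_feasible ::
  "('n::finite, 'e::finite) grid \<Rightarrow> ('e \<Rightarrow> 'v::finite) \<Rightarrow> nat \<Rightarrow> (nat \<Rightarrow> 'n \<Rightarrow> complex)
    \<Rightarrow> (nat \<Rightarrow> real) \<Rightarrow> real \<Rightarrow> real \<Rightarrow> real^'v \<Rightarrow> real^'v \<Rightarrow> complex^'e \<Rightarrow> bool" where
  "mplo_feasible G lev h Sd Os \<beta> lam mg mb Y \<longleftrightarrow>
     (\<forall>e. mg $ lev e / lam \<le> Re (Y $ e) \<and> Re (Y $ e) \<le> lam * mg $ lev e \<and>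
          mb $ lev e / lam \<le> Im (Y $ e) \<and> Im (Y $ e) \<le> lam * mb $ lev e) \<and>
     (\<forall>t\<in>{1..h}. \<exists>Sg V Sf Sr. opf_feasible G (Sd t) (Os t) \<beta> Y Sg V Sf Sr)"

definition mplo_obj :: "real^'e \<Rightarrow> real^'e \<Rightarrow> complex^'e \<Rightarrow> real" where
  "mplo_obj gt bt Y = (\<Sum>e\<in>UNIV. (Re (Y $ e) - gt $ e)\<^sup>2 + (Im (Y $ e) - bt $ e)\<^sup>2)"

definition mplo_optimal ::
  "('n::finite, 'e::finite) grid \<Rightarrow> ('e \<Rightarrow> 'v::finite) \<Rightarrow> nat \<Rightarrow> (nat \<Rightarrow> 'n \<Rightarrow> complex)
    \<Rightarrow> (nat \<Rightarrow> real) \<Rightarrow> real \<Rightarrow> real \<Rightarrow> real^'e \<Rightarrow> real^'e \<Rightarrow> real^'v \<Rightarrow> real^'v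
    \<Rightarrow> complex^'e \<Rightarrow> bool" where
  "mplo_optimal G lev h Sd Os \<beta> lam gt bt mg mb Y \<longleftrightarrow>
     mplo_feasible G lev h Sd Os \<beta> lam mg mb Y \<and>
     (\<forall>Y'. mplo_feasible G lev h Sd Os \<beta> lam mg mb Y' \<longrightarrow> mplo_obj gt bt Y \<le> mplo_obj gt bt Y')"

definition lap_density :: "real \<Rightarrow> real \<Rightarrow> real" where
  "lap_density l x = exp (- \<bar>x\<bar> / l) / (2 * l)"

definition level_size :: "('e::finite \<Rightarrow> 'v) \<Rightarrow> 'v \<Rightarrow> nat" where
  "level_size lev v = card {e. lev e = v}"

definition level_mean :: "('e::finite \<Rightarrow> 'v::finite) \<Rightarrow> real^'e \<Rightarrow> real^'v" where
  "level_mean lev x = (\<chi> v. (\<Sum>e\<in>{e. lev e = v}. x $ e) / real (level_size lev v))"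

definition mplo_noise :: "real \<Rightarrow> real \<Rightarrow> ('e::finite \<Rightarrow> 'v::finite)
    \<Rightarrow> ((real^'e) \<times> (real^'v) \<times> (real^'v)) measure" where
  "mplo_noise \<alpha> \<epsilon> lev = density lborel (\<lambda>(x, y, z). ennreal (
      (\<Prod>e\<in>UNIV. lap_density (3 * \<alpha> / \<epsilon>) (x $ e)) *
      (\<Prod>v\<in>UNIV. lap_density (3 * \<alpha> / (real (level_size lev v) * \<epsilon>)) (y $ v)) *
      (\<Prod>v\<in>UNIV. lap_density (3 * \<alpha> / (real (level_size lev v) * \<epsilon>)) (z $ v))))"

text \<open>The MPLO mechanism on private data D = (g, b); sel is the fixed rule selecting
  (the admittance part of) a solution of step 4 from (g~, b~, mu~_g, mu~_b).
  The output is the vector of released admittances Y-dot (the rest of every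
  released network is public).\<close>
definition mplo_mech :: "real \<Rightarrow> real \<Rightarrow> ('e \<Rightarrow> real) \<Rightarrow> ('e::finite \<Rightarrow> 'v::finite)
    \<Rightarrow> (real^'e \<Rightarrow> real^'e \<Rightarrow> real^'v \<Rightarrow> real^'v \<Rightarrow> complex^'e)
    \<Rightarrow> (real^'e) \<times> (real^'e) \<Rightarrow> (complex^'e) measure" where
  "mplo_mech \<alpha> \<epsilon> r lev sel D =
     distr (mplo_noise \<alpha> \<epsilon> lev) borel
       (\<lambda>(x, y, z). sel (fst D + x) (\<chi> e. r e * (fst D + x) $ e)
                       (level_mean lev (fst D) + y) (level_mean lev (snd D) + z))"

definition alpha_adjacent :: "real \<Rightarrow> (real^'e) \<times> (real^'e) \<Rightarrow> (real^'e) \<times> (real^'e) \<Rightarrow> bool" where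
  "alpha_adjacent \<alpha> D D' \<longleftrightarrow>
     (\<exists>e. (\<forall>e'. e' \<noteq> e \<longrightarrow> fst D $ e' = fst D' $ e' \<and> snd D $ e' = snd D' $ e') \<and>
          \<bar>fst D $ e - fst D' $ e\<bar> \<le> \<alpha> \<and> \<bar>snd D $ e - snd D' $ e\<bar> \<le> \<alpha>)"

definition differentially_private :: "real \<Rightarrow> ('d \<Rightarrow> 'd \<Rightarrow> bool) \<Rightarrow> ('d \<Rightarrow> 'o measure) \<Rightarrow> bool" where
  "differentially_private \<epsilon> adj M \<longleftrightarrow>
     (\<forall>D D'. adj D D' \<longrightarrow>
        (\<forall>A\<in>sets (M D). measure (M D) A \<le> exp \<epsilon> * measure (M D') A))"

end

theory Submission
  imports Defs
begin

lemma f_meas: assumes "c > 0" "\<forall>v. d v > 0" shows "(\<lambda>w::(real^'e::finite) \<times> (real^'v::finite) \<times> (real^'v).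
      (\<Prod>e\<in>UNIV. lap_density (c) (fst w $ e)) *
      (\<Prod>v\<in>UNIV. lap_density (d v) (fst (snd w) $ v)) *
      (\<Prod>v\<in>UNIV. lap_density (d v) (snd (snd w) $ v))) \<in> borel_measurable borel"
proof -
  have "\<And>v. d v \<noteq> 0" "c \<noteq> 0" using assms by (metis less_irrefl)+
  then show ?thesis
  unfolding lap_density_def by (intro borel_measurable_continuous_onI continuous_intros) auto
qed

lemma S_meas:
  fixes sel :: "real^'e::finite \<Rightarrow> real^'e \<Rightarrow> real^'v::finite \<Rightarrow> real^'v \<Rightarrow> complex^'e"
  assumes "(\<lambda>(gt, bt, mg, mb). sel gt bt mg mb) \<in> borel_measurable borel"
  shows "(\<lambda>u::(real^'e) \<times> (real^'v) \<times> (real^'v). sel (fst u) (\<chi> e. r e * fst u $ e) (fst (snd u)) (snd (snd u))) \<in> borel_measurable borel"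
proof -
  have "(\<lambda>u::(real^'e) \<times> (real^'v) \<times> (real^'v). (fst u, (\<chi> e. r e * fst u $ e), fst (snd u), snd (snd u))) \<in> borel_measurable borel"
    by (intro borel_measurable_continuous_onI continuous_intros)
  from measurable_compose[OF this assms] show ?thesis by (simp add: o_def split_beta)
qed

lemma shift_bound:
  fixes f :: "'a::euclidean_space \<Rightarrow> real" and S :: "'a \<Rightarrow> 'b::topological_space"
  assumes fm: "f \<in> borel_measurable borel" and fpos: "\<And>w. f w \<ge> 0"
    and Sm: "S \<in> borel_measurable borel" and A: "A \<in> sets borel"
    and le: "\<And>u. f (u - a) \<le> c * f (u - a')" and c: "c \<ge> 0"
  shows "emeasure (distr (density lborel (\<lambda>w. ennreal (f w))) borel (\<lambda>w. S (a + w))) A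
     \<le> ennreal c * emeasure (distr (density lborel (\<lambda>w. ennreal (f w))) borel (\<lambda>w. S (a' + w))) A"
proof -
  have SA: "S -` A \<in> sets borel" using Sm A by (metis measurable_sets space_borel vimage_Int UNIV_I Int_UNIV_right)
  have eq: "emeasure (distr (density lborel (\<lambda>w. ennreal (f w))) borel (\<lambda>w. S (b + w))) A
      = (\<integral>\<^sup>+ u. ennreal (f (u - b)) * indicator (S -` A) u \<partial>lborel)" for b
  proof -
    have m1: "(\<lambda>w. S (b + w)) \<in> measurable (density lborel (\<lambda>w. ennreal (f w))) borel"
      using Sm by (simp add: measurable_compose[OF _ Sm])
    have hm: "(\<lambda>u. ennreal (f (u - b)) * indicator (S -` A) u) \<in> borel_measurable borel"
      using fm SA by measurable
    have "emeasure (distr (density lborel (\<lambda>w. ennreal (f w))) borel (\<lambda>w. S (b + w))) A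
        = emeasure (density lborel (\<lambda>w. ennreal (f w))) ((\<lambda>w. S (b + w)) -` A)"
      using m1 A by (simp add: emeasure_distr)
    also have "\<dots> = (\<integral>\<^sup>+ w. ennreal (f w) * indicator ((\<lambda>w. S (b + w)) -` A) w \<partial>lborel)"
      proof -
      have "(\<lambda>w. S (b + w)) \<in> borel_measurable borel" using Sm by (simp add: measurable_compose[OF _ Sm])
      from measurable_sets[OF this A] have "(\<lambda>w. S (b + w)) -` A \<in> sets borel" by simp
      then show ?thesis using fm by (subst emeasure_density) auto
    qed
    also have "\<dots> = (\<integral>\<^sup>+ w. ennreal (f ((b + w) - b)) * indicator (S -` A) (b + w) \<partial>lborel)"
      by (simp add: indicator_def)
    also have "\<dots> = (\<integral>\<^sup>+ u. ennreal (f (u - b)) * indicator (S -` A) u \<partial>distr lborel borel ((+) b))"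
      using hm by (subst nn_integral_distr) auto
    also have "\<dots> = (\<integral>\<^sup>+ u. ennreal (f (u - b)) * indicator (S -` A) u \<partial>lborel)"
      by (simp add: lborel_distr_plus)
    finally show ?thesis .
  qed
  have "(\<integral>\<^sup>+ u. ennreal (f (u - a)) * indicator (S -` A) u \<partial>lborel)
      \<le> (\<integral>\<^sup>+ u. ennreal c * (ennreal (f (u - a')) * indicator (S -` A) u) \<partial>lborel)"
  proof (rule nn_integral_mono)
    fix u
    have "ennreal (f (u - a)) \<le> ennreal c * ennreal (f (u - a'))"
      using le[of u] c fpos by (simp add: ennreal_mult[symmetric])
    then show "ennreal (f (u - a)) * indicator (S -` A) u \<le> ennreal c * (ennreal (f (u - a')) * indicator (S -` A) u)"
      by (simp add: indicator_def)
  qed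
  also have "\<dots> = ennreal c * (\<integral>\<^sup>+ u. ennreal (f (u - a')) * indicator (S -` A) u \<partial>lborel)"
  proof -
    have "(\<lambda>u. ennreal (f (u - a')) * indicator (S -` A) u) \<in> borel_measurable borel"
      using fm SA by measurable
    then show ?thesis by (simp add: nn_integral_cmult)
  qed
  finally show ?thesis by (simp only: eq)
qed

lemma lap_shift:
  assumes "l > 0"
  shows "lap_density l (s - a) \<le> exp (\<bar>a - a'\<bar> / l) * lap_density l (s - a')"
proof -
  have "- \<bar>s - a\<bar> / l \<le> \<bar>a - a'\<bar> / l + - \<bar>s - a'\<bar> / l"
    using assms by (simp add: divide_simps)
  then have "exp (- \<bar>s - a\<bar> / l) \<le> exp (\<bar>a - a'\<bar> / l) * exp (- \<bar>s - a'\<bar> / l)"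
    by (simp add: exp_add[symmetric])
  then show ?thesis using assms unfolding lap_density_def
    by (simp add: divide_right_mono)
qed

lemma lap_nonneg: "l > 0 \<Longrightarrow> lap_density l x \<ge> 0"
  unfolding lap_density_def by simp

lemma prod_shift:
  assumes "finite I" "\<And>i. l i > 0"
  shows "(\<Prod>i\<in>I. lap_density (l i) (s i - a i))
     \<le> exp (\<Sum>i\<in>I. \<bar>a i - a' i\<bar> / l i) * (\<Prod>i\<in>I. lap_density (l i) (s i - a' i))"
proof -
  have "(\<Prod>i\<in>I. lap_density (l i) (s i - a i)) \<le> (\<Prod>i\<in>I. exp (\<bar>a i - a' i\<bar> / l i) * lap_density (l i) (s i - a' i))"
    by (rule prod_mono) (use assms lap_shift lap_nonneg in auto)
  also have "\<dots> = exp (\<Sum>i\<in>I. \<bar>a i - a' i\<bar> / l i) * (\<Prod>i\<in>I. lap_density (l i) (s i - a' i))"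
    using assms by (simp add: exp_sum prod.distrib)
  finally show ?thesis .
qed

lemma sum_single_bound:
  fixes x x' :: "real^'e::finite"
  assumes "\<forall>e. e \<noteq> e0 \<longrightarrow> x $ e = x' $ e" "\<bar>x $ e0 - x' $ e0\<bar> \<le> \<alpha>" "\<alpha> > 0" "\<epsilon> > 0"
  shows "(\<Sum>e\<in>UNIV. \<bar>x $ e - x' $ e\<bar> / (3 * \<alpha> / \<epsilon>)) \<le> \<epsilon> / 3"
proof -
  have "(\<Sum>e\<in>UNIV. \<bar>x $ e - x' $ e\<bar> / (3 * \<alpha> / \<epsilon>)) = (\<Sum>e\<in>{e0}. \<bar>x $ e - x' $ e\<bar> / (3 * \<alpha> / \<epsilon>))"
    by (rule sum.mono_neutral_right) (use assms in auto)
  also have "\<dots> = \<bar>x $ e0 - x' $ e0\<bar> * \<epsilon> / (3 * \<alpha>)" by simp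
  also have "\<dots> \<le> \<alpha> * \<epsilon> / (3 * \<alpha>)"
    using assms by (intro divide_right_mono mult_right_mono) auto
  also have "\<dots> = \<epsilon> / 3" using assms by simp
  finally show ?thesis .
qed

lemma level_size_pos: "surj lev \<Longrightarrow> level_size (lev :: 'e::finite \<Rightarrow> 'v) v > 0"
  unfolding level_size_def by (metis (mono_tags, lifting) card_gt_0_iff empty_Collect_eq finite surjD)

lemma mean_bound:
  fixes x x' :: "real^'e::finite" and lev :: "'e \<Rightarrow> 'v::finite"
  assumes "\<forall>e. e \<noteq> e0 \<longrightarrow> x $ e = x' $ e" "\<bar>x $ e0 - x' $ e0\<bar> \<le> \<alpha>" "\<alpha> > 0" "\<epsilon> > 0"
    and "surj lev"
  shows "(\<Sum>v\<in>UNIV. \<bar>level_mean lev x $ v - level_mean lev x' $ v\<bar> / (3 * \<alpha> / (real (level_size lev v) * \<epsilon>))) \<le> \<epsilon> / 3"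
proof -
  define T where "T v = \<bar>level_mean lev x $ v - level_mean lev x' $ v\<bar> / (3 * \<alpha> / (real (level_size lev v) * \<epsilon>))" for v
  have diff: "level_mean lev x $ v - level_mean lev x' $ v = (\<Sum>e\<in>{e. lev e = v}. x $ e - x' $ e) / real (level_size lev v)" for v
    unfolding level_mean_def by (simp add: sum_subtractf diff_divide_distrib)
  have z: "T v = 0" if "v \<noteq> lev e0" for v
  proof -
    have "(\<Sum>e\<in>{e. lev e = v}. x $ e - x' $ e) = 0"
      by (rule sum.neutral) (use assms that in auto)
    then show ?thesis unfolding T_def diff by simp
  qed
  have s0: "(\<Sum>e\<in>{e. lev e = lev e0}. x $ e - x' $ e) = (\<Sum>e\<in>{e0}. x $ e - x' $ e)"
    by (rule sum.mono_neutral_right) (use assms in auto)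
  then have s0': "(\<Sum>e\<in>{e. lev e = lev e0}. x $ e - x' $ e) = x $ e0 - x' $ e0" by simp
  have npos: "real (level_size lev (lev e0)) > 0" using level_size_pos[OF assms(5)] by simp
  have "(\<Sum>v\<in>UNIV. T v) = (\<Sum>v\<in>{lev e0}. T v)"
    by (rule sum.mono_neutral_right) (use z in auto)
  also have "\<dots> = \<bar>x $ e0 - x' $ e0\<bar> * \<epsilon> / (3 * \<alpha>)"
    unfolding T_def diff using npos by (simp add: s0' abs_divide field_simps)
  also have "\<dots> \<le> \<alpha> * \<epsilon> / (3 * \<alpha>)"
    using assms by (intro divide_right_mono mult_right_mono) auto
  also have "\<dots> = \<epsilon> / 3" using assms by simp
  finally show ?thesis unfolding T_def .
qed

lemma key:
  fixes lev :: "'e::finite \<Rightarrow> 'v::finite"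
    and sel :: "real^'e \<Rightarrow> real^'e \<Rightarrow> real^'v \<Rightarrow> real^'v \<Rightarrow> complex^'e"
  assumes ap: "\<alpha> > 0" and ep: "\<epsilon> > 0" and sj: "surj lev"
    and selm: "(\<lambda>(gt, bt, mg, mb). sel gt bt mg mb) \<in> borel_measurable borel"
    and adj: "alpha_adjacent \<alpha> D D'" and A: "A \<in> sets borel"
  shows "emeasure (mplo_mech \<alpha> \<epsilon> r lev sel D) A \<le> ennreal (exp \<epsilon>) * emeasure (mplo_mech \<alpha> \<epsilon> r lev sel D') A"
proof -
  define c where "c = 3 * \<alpha> / \<epsilon>"
  define d where "d = (\<lambda>v. 3 * \<alpha> / (real (level_size lev v) * \<epsilon>))"
  define f where "f = (\<lambda>w::(real^'e) \<times> (real^'v) \<times> (real^'v).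
      (\<Prod>e\<in>UNIV. lap_density (c) (fst w $ e)) *
      (\<Prod>v\<in>UNIV. lap_density (d v) (fst (snd w) $ v)) *
      (\<Prod>v\<in>UNIV. lap_density (d v) (snd (snd w) $ v)))"
  define S where "S = (\<lambda>u::(real^'e) \<times> (real^'v) \<times> (real^'v). sel (fst u) (\<chi> e. r e * fst u $ e) (fst (snd u)) (snd (snd u)))"
  define a where "a = (\<lambda>DD::(real^'e) \<times> (real^'e). (fst DD, level_mean lev (fst DD), level_mean lev (snd DD)))"
  have cpos: "c > 0" using ap ep by (simp add: c_def)
  have dpos: "\<And>v. d v > 0" using ap ep level_size_pos[OF sj] by (simp add: d_def)
  have mech: "mplo_mech \<alpha> \<epsilon> r lev sel DD = distr (density lborel (\<lambda>w. ennreal (f w))) borel (\<lambda>w. S (a DD + w))" for DD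
  proof -
    have 1: "(\<lambda>(x, y, z). ennreal (
      (\<Prod>e\<in>UNIV. lap_density (3 * \<alpha> / \<epsilon>) (x $ e)) *
      (\<Prod>v\<in>UNIV. lap_density (3 * \<alpha> / (real (level_size lev v) * \<epsilon>)) (y $ v)) *
      (\<Prod>v\<in>UNIV. lap_density (3 * \<alpha> / (real (level_size lev v) * \<epsilon>)) (z $ v)))) = (\<lambda>w. ennreal (f w))"
      by (auto simp: f_def c_def d_def split_beta)
    have 2: "(\<lambda>(x, y, z). sel (fst DD + x) (\<chi> e. r e * (fst DD + x) $ e)
                       (level_mean lev (fst DD) + y) (level_mean lev (snd DD) + z)) = (\<lambda>w. S (a DD + w))"
      by (auto simp: S_def a_def split_beta)
    show ?thesis unfolding mplo_mech_def mplo_noise_def 1 2 ..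
  qed
  obtain e0 where e0: "\<forall>e'. e' \<noteq> e0 \<longrightarrow> fst D $ e' = fst D' $ e' \<and> snd D $ e' = snd D' $ e'"
    "\<bar>fst D $ e0 - fst D' $ e0\<bar> \<le> \<alpha>" "\<bar>snd D $ e0 - snd D' $ e0\<bar> \<le> \<alpha>"
    using adj unfolding alpha_adjacent_def by blast
  have le: "f (u - a D) \<le> exp \<epsilon> * f (u - a D')" for u
  proof -
    have P1: "(\<Prod>e\<in>UNIV. lap_density c (fst u $ e - fst D $ e)) \<le> exp (\<epsilon>/3) * (\<Prod>e\<in>UNIV. lap_density c (fst u $ e - fst D' $ e))"
    proof -
      have "(\<Sum>e\<in>UNIV. \<bar>fst D $ e - fst D' $ e\<bar> / c) \<le> \<epsilon>/3"
        unfolding c_def by (rule sum_single_bound[of e0]) (use e0 ap ep in auto)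
      then have "exp (\<Sum>e\<in>UNIV. \<bar>fst D $ e - fst D' $ e\<bar> / c) \<le> exp (\<epsilon>/3)" by simp
      moreover have "0 \<le> (\<Prod>e\<in>UNIV. lap_density c (fst u $ e - fst D' $ e))"
        by (intro prod_nonneg lap_nonneg cpos)
      ultimately show ?thesis
        using prod_shift[of UNIV "\<lambda>_. c" "\<lambda>e. fst u $ e" "\<lambda>e. fst D $ e" "\<lambda>e. fst D' $ e"] cpos
        by (meson mult_right_mono order_trans finite)
    qed
    have P2: "(\<Prod>v\<in>UNIV. lap_density (d v) (fst (snd u) $ v - level_mean lev (fst D) $ v))
       \<le> exp (\<epsilon>/3) * (\<Prod>v\<in>UNIV. lap_density (d v) (fst (snd u) $ v - level_mean lev (fst D') $ v))"
    proof -
      have "(\<Sum>v\<in>UNIV. \<bar>level_mean lev (fst D) $ v - level_mean lev (fst D') $ v\<bar> / d v) \<le> \<epsilon>/3"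
        unfolding d_def by (rule mean_bound[of e0]) (use e0 ap ep sj in auto)
      then have "exp (\<Sum>v\<in>UNIV. \<bar>level_mean lev (fst D) $ v - level_mean lev (fst D') $ v\<bar> / d v) \<le> exp (\<epsilon>/3)" by simp
      moreover have "0 \<le> (\<Prod>v\<in>UNIV. lap_density (d v) (fst (snd u) $ v - level_mean lev (fst D') $ v))"
        by (intro prod_nonneg lap_nonneg dpos)
      ultimately show ?thesis
        using prod_shift[of UNIV d "\<lambda>v. fst (snd u) $ v" "\<lambda>v. level_mean lev (fst D) $ v" "\<lambda>v. level_mean lev (fst D') $ v"] dpos
        by (meson mult_right_mono order_trans finite)
    qed
    have P3: "(\<Prod>v\<in>UNIV. lap_density (d v) (snd (snd u) $ v - level_mean lev (snd D) $ v))
       \<le> exp (\<epsilon>/3) * (\<Prod>v\<in>UNIV. lap_density (d v) (snd (snd u) $ v - level_mean lev (snd D') $ v))"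
    proof -
      have "(\<Sum>v\<in>UNIV. \<bar>level_mean lev (snd D) $ v - level_mean lev (snd D') $ v\<bar> / d v) \<le> \<epsilon>/3"
        unfolding d_def by (rule mean_bound[of e0]) (use e0 ap ep sj in auto)
      then have "exp (\<Sum>v\<in>UNIV. \<bar>level_mean lev (snd D) $ v - level_mean lev (snd D') $ v\<bar> / d v) \<le> exp (\<epsilon>/3)" by simp
      moreover have "0 \<le> (\<Prod>v\<in>UNIV. lap_density (d v) (snd (snd u) $ v - level_mean lev (snd D') $ v))"
        by (intro prod_nonneg lap_nonneg dpos)
      ultimately show ?thesis
        using prod_shift[of UNIV d "\<lambda>v. snd (snd u) $ v" "\<lambda>v. level_mean lev (snd D) $ v" "\<lambda>v. level_mean lev (snd D') $ v"] dpos
        by (meson mult_right_mono order_trans finite)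
    qed
    define p1 where "p1 = (\<Prod>e\<in>UNIV. lap_density c (fst u $ e - fst D $ e))"
    define p2 where "p2 = (\<Prod>v\<in>UNIV. lap_density (d v) (fst (snd u) $ v - level_mean lev (fst D) $ v))"
    define p3 where "p3 = (\<Prod>v\<in>UNIV. lap_density (d v) (snd (snd u) $ v - level_mean lev (snd D) $ v))"
    define q1 where "q1 = (\<Prod>e\<in>UNIV. lap_density c (fst u $ e - fst D' $ e))"
    define q2 where "q2 = (\<Prod>v\<in>UNIV. lap_density (d v) (fst (snd u) $ v - level_mean lev (fst D') $ v))"
    define q3 where "q3 = (\<Prod>v\<in>UNIV. lap_density (d v) (snd (snd u) $ v - level_mean lev (snd D') $ v))"
    have nn: "0 \<le> p1" "0 \<le> p2" "0 \<le> p3" "0 \<le> q1" "0 \<le> q2" "0 \<le> q3"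
      unfolding p1_def p2_def p3_def q1_def q2_def q3_def
      by (intro prod_nonneg lap_nonneg cpos dpos)+
    have fa: "f (u - a D) = p1 * p2 * p3" "f (u - a D') = q1 * q2 * q3"
      unfolding f_def a_def p1_def p2_def p3_def q1_def q2_def q3_def by simp_all
    have "p1 * p2 * p3 \<le> (exp (\<epsilon>/3) * q1) * (exp (\<epsilon>/3) * q2) * (exp (\<epsilon>/3) * q3)"
      using P1 P2 P3 nn unfolding p1_def p2_def p3_def q1_def q2_def q3_def[symmetric]
      by (intro mult_mono) (auto simp: q1_def q2_def q3_def)
    also have "\<dots> = (exp (\<epsilon>/3) * exp (\<epsilon>/3) * exp (\<epsilon>/3)) * (q1 * q2 * q3)" by (simp add: algebra_simps)
    also have "exp (\<epsilon>/3) * exp (\<epsilon>/3) * exp (\<epsilon>/3) = exp \<epsilon>" by (simp add: exp_add[symmetric])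
    finally show ?thesis using fa by simp
  qed
  have fm: "f \<in> borel_measurable borel" unfolding f_def by (rule f_meas) (use cpos dpos in auto)
  have fpos: "\<And>w. f w \<ge> 0" unfolding f_def by (intro mult_nonneg_nonneg prod_nonneg lap_nonneg cpos dpos)
  have Sm: "S \<in> borel_measurable borel" unfolding S_def by (rule S_meas[OF selm])
  show ?thesis unfolding mech
    by (rule shift_bound[OF fm fpos Sm A le]) simp
qed

theorem theorem5:
  fixes G :: "('n::finite, 'e::finite) grid"
    and lev :: "'e \<Rightarrow> 'v::finite"
    and r :: "'e \<Rightarrow> real"
    and h :: nat
    and Sd :: "nat \<Rightarrow> 'n \<Rightarrow> complex"
    and Os :: "nat \<Rightarrow> real"
    and \<alpha> \<epsilon> \<beta> lam :: real
    and sel :: "real^'e \<Rightarrow> real^'e \<Rightarrow> real^'v \<Rightarrow> real^'v \<Rightarrow> complex^'e"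
  assumes "\<alpha> > 0" and "\<epsilon> > 0" and "\<beta> > 0" and "lam > 0"
    and "surj lev"
    and "\<forall>t\<in>{1..h}. Os t > 0"
    and "\<forall>gt bt mg mb. (\<exists>Y. mplo_optimal G lev h Sd Os \<beta> lam gt bt mg mb Y) \<longrightarrow>
            mplo_optimal G lev h Sd Os \<beta> lam gt bt mg mb (sel gt bt mg mb)"
    and "(\<lambda>(gt, bt, mg, mb). sel gt bt mg mb) \<in> borel_measurable borel"
  shows "differentially_private \<epsilon> (alpha_adjacent \<alpha>) (mplo_mech \<alpha> \<epsilon> r lev sel)"
proof -
  have adjsym: "alpha_adjacent \<alpha> D' D" if "alpha_adjacent \<alpha> D D'" for D D' :: "(real^'e) \<times> (real^'e)"
    using that unfolding alpha_adjacent_def by (metis abs_minus_commute)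
  show ?thesis unfolding differentially_private_def
  proof (intro allI impI ballI)
    fix D D' A
    assume adj: "alpha_adjacent \<alpha> D D'" and A0: "A \<in> sets (mplo_mech \<alpha> \<epsilon> r lev sel D)"
    have A: "A \<in> sets borel" using A0 by (simp add: mplo_mech_def)
    define x where "x = emeasure (mplo_mech \<alpha> \<epsilon> r lev sel D) A"
    define y where "y = emeasure (mplo_mech \<alpha> \<epsilon> r lev sel D') A"
    have xy: "x \<le> ennreal (exp \<epsilon>) * y" unfolding x_def y_def
      by (rule key[OF assms(1,2,5,8) adj A])
    have yx: "y \<le> ennreal (exp \<epsilon>) * x" unfolding x_def y_def
      by (rule key[OF assms(1,2,5,8) adjsym[OF adj] A])
    show "measure (mplo_mech \<alpha> \<epsilon> r lev sel D) A \<le> exp \<epsilon> * measure (mplo_mech \<alpha> \<epsilon> r lev sel D') A"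
    proof (cases "y = top")
      case True
      then have "x = top" using yx by (auto simp: ennreal_mult_eq_top_iff top_unique)
      then show ?thesis using True unfolding measure_def x_def y_def by simp
    next
      case False
      then have "ennreal (exp \<epsilon>) * y < top" by (simp add: ennreal_mult_less_top top.not_eq_extremum)
      then have "enn2real x \<le> enn2real (ennreal (exp \<epsilon>) * y)" using xy by (rule enn2real_mono[rotated])
      also have "\<dots> = exp \<epsilon> * enn2real y" by (simp add: enn2real_mult)
      finally show ?thesis unfolding measure_def x_def y_def .
    qed
  qed
qed

end
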